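(* Let $S=\{x_0x_2x_3=x_1^3\}\subset\mathbb P^3$, with singular points $p_0=[1:0:0:0]$, $p_2=[0:0:1:0]$, $p_3=[0:0:0:1]$ (all of type $\boldsymbol A_2$), and let $H_*=\{x_1=0\}|_S=\overline{p_0p_2}+\overline{p_0p_3}+\overline{p_2p_3}$. For $i\in\{0,2,3\}$ let $\mathcal H_i\subset|-K_S|=|\mathcal O_S(1)|\cong(\mathbb P^3)^*$ be the net of hyperplane sections whose base locus is $p_i$, and let $j,k$ be such that $\{i,j,k\}=\{0,2,3\}$. Then $\mathcal H_i$ contains three pencils $\mathcal H_i^1,\mathcal H_i^2,\mathcal H_i^3\subset\mathcal H_i$ whose common intersection is empty and such that: (i) the elements of $|-K_S|\setminus\bigcup_i\mathcal H_i$ are the hyperplane sections containing none of $p_0,p_2,p_3$; (ii) the elements of $\mathcal H_i\setminus(\mathcal H_i^1\cup\mathcal H_i^2\cup\mathcal H_i^3)$ are irreducible plane cubic curves with precisely one nodal ($\boldsymbol A_1$) singularity, supported at $p_i$; (iii) $\mathcal H_i^2\cap\mathcal H_i^3=H_*$, $\mathcal H_i^1\cap\mathcal H_i^2=3\overline{p_ip_j}$ and $\mathcal H_i^1\cap\mathcal H_i^3=3\overline{p_ip_k}$; (iv) the elements of $\mathcal H_i^2\setminus(\mathcal H_i^1\cup\mathcal H_i^3)=\mathcal H_i^2\setminus\{H_*,3\overline{p_ip_j}\}$ are reducible plane cubics $\overline{p_ip_j}+C$ with $C$ an irreducible plane conic containing $p_i,p_j$ and coplanar with $\overline{p_ip_j}$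 (respectively, the elements of $\mathcal H_i^3\setminus(\mathcal H_i^1\cup\mathcal H_i^2)=\mathcal H_i^3\setminus\{H_*,3\overline{p_ip_k}\}$ are $\overline{p_ip_k}+C$ with $C$ an irreducible plane conic containing $p_i,p_k$ and coplanar with $\overline{p_ip_k}$); (v) the elements of $\mathcal H_i^1\setminus\{3\overline{p_ip_j},3\overline{p_ip_k}\}$ are irreducible plane cubic curves meeting $\overline{p_ip_j}$ and $\overline{p_ip_k}$ only at $p_i$, meeting $\overline{p_jp_k}$ away from $p_j$ and $p_k$, and having precisely one cuspidal ($\boldsymbol A_2$) singularity, supported at $p_i$.
   Context: $\overline{p_ip_j}$ denotes the line in $S$ through $p_i$ and $p_j$; $3\overline{p_ip_j}$ is that line with multiplicity three (a hyperplane section of $S$). *)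

theory Defs
  imports "HOL-Analysis.Analysis"
begin

text \<open>Homogeneous coordinates x0,x1,x2,x3 of P^3 over the complex numbers are the
components 0,1,2,3 of a vector in complex^4.  A point of P^3 is represented by any
nonzero vector; a hyperplane (an element of (P^3)^* = |O_S(1)| = |-K_S|) by any nonzero
coefficient vector a, the hyperplane being {x. a0 x0 + a1 x1 + a2 x2 + a3 x3 = 0}.
All notions below are invariant under rescaling.\<close>

type_synonym cvec = "complex ^ 4"

definition dotc :: "cvec \<Rightarrow> cvec \<Rightarrow> complex" where
  "dotc a x = (\<Sum>m\<in>UNIV. a $ m * x $ m)"

text \<open>Standard basis vector: coordinate point p_k, or the hyperplane {x_k = 0}.\<close>
definition ebas :: "4 \<Rightarrow> cvec" where
  "ebas k = (\<chi> m. if m = k then 1 else 0)"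

definition Fcub :: "cvec \<Rightarrow> complex" where
  "Fcub x = x $ 0 * x $ 2 * x $ 3 - (x $ 1) ^ 3"

definition sec_pts :: "cvec \<Rightarrow> cvec set" where
  "sec_pts a = {x. x \<noteq> 0 \<and> dotc a x = 0 \<and> Fcub x = 0}"

definition lineP :: "cvec \<Rightarrow> cvec \<Rightarrow> cvec set" where
  "lineP p q = {s *s p + t *s q | s t. True}"

text \<open>Pencil (projective line in (P^3)^*) spanned by u and v, as a linear subspace.\<close>
definition pencil :: "cvec \<Rightarrow> cvec \<Rightarrow> cvec set" where
  "pencil u v = {s *s u + t *s v | s t. True}"

definition indep2 :: "cvec \<Rightarrow> cvec \<Rightarrow> bool" where
  "indep2 u v \<longleftrightarrow> (\<forall>s t. s *s u + t *s v = 0 \<longrightarrow> s = 0 \<and> t = 0)"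

definition indep3 :: "cvec \<Rightarrow> cvec \<Rightarrow> cvec \<Rightarrow> bool" where
  "indep3 p u v \<longleftrightarrow> (\<forall>r s t. r *s p + s *s u + t *s v = 0 \<longrightarrow> r = 0 \<and> s = 0 \<and> t = 0)"

definition quadf :: "complex ^ 4 ^ 4 \<Rightarrow> cvec \<Rightarrow> complex" where
  "quadf M x = (\<Sum>i\<in>UNIV. \<Sum>j\<in>UNIV. M $ i $ j * x $ i * x $ j)"

definition reducible_sec :: "cvec \<Rightarrow> bool" where
  "reducible_sec a \<longleftrightarrow> (\<exists>b M. (\<exists>x. dotc a x = 0 \<and> dotc b x \<noteq> 0) \<and>
      (\<forall>x. dotc a x = 0 \<longrightarrow> Fcub x = dotc b x * quadf M x))"

definition irreducible_sec :: "cvec \<Rightarrow> bool" where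
  "irreducible_sec a \<longleftrightarrow> a \<noteq> 0 \<and> \<not> reducible_sec a"

text \<open>The hyperplane section cut by a is the divisor 3 * (line pq), i.e. F restricted to
the plane is c * l^3 with l a linear form on the plane whose zero locus is the line pq.\<close>
definition triple_line_sec :: "cvec \<Rightarrow> cvec \<Rightarrow> cvec \<Rightarrow> bool" where
  "triple_line_sec a p q \<longleftrightarrow> a \<noteq> 0 \<and> dotc a p = 0 \<and> dotc a q = 0 \<and>
     (\<exists>b c. c \<noteq> 0 \<and> dotc b p = 0 \<and> dotc b q = 0 \<and> (\<exists>x. dotc a x = 0 \<and> dotc b x \<noteq> 0) \<and>
        (\<forall>x. dotc a x = 0 \<longrightarrow> Fcub x = c * (dotc b x) ^ 3))"

text \<open>The hyperplane section cut by a is (line pq) + C with C an irreducible plane conic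
in the same plane passing through p and q.\<close>
definition line_plus_conic_sec :: "cvec \<Rightarrow> cvec \<Rightarrow> cvec \<Rightarrow> bool" where
  "line_plus_conic_sec a p q \<longleftrightarrow> a \<noteq> 0 \<and> dotc a p = 0 \<and> dotc a q = 0 \<and>
     (\<exists>b M. dotc b p = 0 \<and> dotc b q = 0 \<and> (\<exists>x. dotc a x = 0 \<and> dotc b x \<noteq> 0) \<and>
        (\<forall>x. dotc a x = 0 \<longrightarrow> Fcub x = dotc b x * quadf M x) \<and>
        quadf M p = 0 \<and> quadf M q = 0 \<and>
        \<not> (\<exists>b1 b2. \<forall>x. dotc a x = 0 \<longrightarrow> quadf M x = dotc b1 x * dotc b2 x))"

definition sing_pt :: "cvec \<Rightarrow> cvec \<Rightarrow> bool" where
  "sing_pt a x \<longleftrightarrow> x \<noteq> 0 \<and> dotc a x = 0 \<and> Fcub x = 0 \<and>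
     (\<forall>w. dotc a w = 0 \<longrightarrow> ((\<lambda>t. Fcub (x + t *s w)) has_field_derivative 0) (at 0))"

text \<open>Local equation of the plane curve at p in an affine chart (s,t) \<mapsto> p + s u + t v of
the plane: it has no constant or linear terms, quadratic part
c20 s^2 + c11 s t + c02 t^2 and cubic part d30 s^3 + d21 s^2 t + d12 s t^2 + d03 t^3.\<close>
definition local_jet :: "cvec \<Rightarrow> cvec \<Rightarrow> complex \<Rightarrow> complex \<Rightarrow> complex \<Rightarrow>
    complex \<Rightarrow> complex \<Rightarrow> complex \<Rightarrow> complex \<Rightarrow> bool" where
  "local_jet a p c20 c11 c02 d30 d21 d12 d03 \<longleftrightarrow> a \<noteq> 0 \<and> dotc a p = 0 \<and>
     (\<exists>u v. dotc a u = 0 \<and> dotc a v = 0 \<and> indep3 p u v \<and>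
        (\<forall>s t. Fcub (p + s *s u + t *s v) =
            c20 * s^2 + c11 * s * t + c02 * t^2 +
            d30 * s^3 + d21 * s^2 * t + d12 * s * t^2 + d03 * t^3))"

text \<open>A_1 (node): the quadratic part of the local equation is nondegenerate.\<close>
definition node_at :: "cvec \<Rightarrow> cvec \<Rightarrow> bool" where
  "node_at a p \<longleftrightarrow> (\<exists>c20 c11 c02 d30 d21 d12 d03.
      local_jet a p c20 c11 c02 d30 d21 d12 d03 \<and> c11^2 - 4 * c20 * c02 \<noteq> 0)"

text \<open>A_2 (cusp): the quadratic part is the nonzero square of a linear form l and the
cubic part does not vanish on the kernel direction of l (local equation l^2 + g3 + ...
with l not dividing g3, the 3-jet of y^2 + x^3).\<close>
definition cusp_at :: "cvec \<Rightarrow> cvec \<Rightarrow> bool" where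
  "cusp_at a p \<longleftrightarrow> (\<exists>c20 c11 c02 d30 d21 d12 d03.
      local_jet a p c20 c11 c02 d30 d21 d12 d03 \<and>
      c11^2 - 4 * c20 * c02 = 0 \<and> \<not> (c20 = 0 \<and> c11 = 0 \<and> c02 = 0) \<and>
      (\<forall>s0 t0. (s0, t0) \<noteq> (0, 0) \<and> c20 * s0^2 + c11 * s0 * t0 + c02 * t0^2 = 0 \<longrightarrow>
         d30 * s0^3 + d21 * s0^2 * t0 + d12 * s0 * t0^2 + d03 * t0^3 \<noteq> 0))"

definition net :: "4 \<Rightarrow> cvec set" where
  "net i = {a. a \<noteq> 0 \<and> dotc a (ebas i) = 0}"

definition ppt :: "cvec \<Rightarrow> cvec set" where
  "ppt p = {c *s p | c. c \<noteq> 0}"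

end

theory Submission
  imports Defs
begin
definition good :: "4 \<Rightarrow> 4 \<Rightarrow> 4 \<Rightarrow> bool" where
 "good i j k \<longleftrightarrow> i \<noteq> 1 \<and> j \<noteq> 1 \<and> k \<noteq> 1 \<and> i \<noteq> j \<and> i \<noteq> k \<and> j \<noteq> k"

lemma good_swap: "good i j k \<Longrightarrow> good i k j" unfolding good_def by auto

lemma good_univ: assumes "good i j k" shows "UNIV = {1,i,j,k}"
proof -
  have "card {1,i,j,k} = 4" using assms unfolding good_def by auto
  moreover have "CARD(4) = 4" by simp
  ultimately have "{1,i,j,k} = (UNIV::4 set)" by (intro card_subset_eq) auto
  then show ?thesis by simp
qed

lemma n4: "(4::4) = 0"
  by simp

lemma good_F: assumes "good i j k" shows "x$0*x$2*x$3 = x$i*x$j*(x$k::complex)"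
  using assms unfolding good_def
  using exhaust_4[of i] exhaust_4[of j] exhaust_4[of k]
  by (auto simp: mult_ac n4)

definition mk :: "4\<Rightarrow>4\<Rightarrow>4\<Rightarrow>complex\<Rightarrow>complex\<Rightarrow>complex\<Rightarrow>complex\<Rightarrow>cvec" where
  "mk i j k c1 ci cj ck = (\<chi> m. if m = 1 then c1 else if m = i then ci else if m = j then cj else ck)"

lemma ebas_comp [simp]: "ebas p $ q = (if q = p then 1 else 0)"
  by (simp add: ebas_def)

lemma dot_ebas [simp]: "dotc a (ebas p) = a $ p"
  by (simp add: dotc_def ebas_def if_distrib cong: if_cong)

lemma dot_ebas2 [simp]: "dotc (ebas p) x = x $ p"
proof -
  have "dotc (ebas p) x = (\<Sum>m\<in>UNIV. if m = p then x$m else 0)"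
    unfolding dotc_def by (rule sum.cong) (auto simp: ebas_def)
  then show ?thesis by simp
qed

lemma mem_pencil: "p \<noteq> q \<Longrightarrow> a \<in> pencil (ebas p) (ebas q) \<longleftrightarrow> (\<forall>m. m \<noteq> p \<and> m \<noteq> q \<longrightarrow> a $ m = 0)"
  unfolding pencil_def
proof (rule iffI)
  assume "p \<noteq> q" "a \<in> {s *s ebas p + t *s ebas q |s t. True}"
  then show "\<forall>m. m \<noteq> p \<and> m \<noteq> q \<longrightarrow> a $ m = 0" by auto
next
  assume "p \<noteq> q" "\<forall>m. m \<noteq> p \<and> m \<noteq> q \<longrightarrow> a $ m = 0"
  then have "a = a$p *s ebas p + a$q *s ebas q" by (auto simp: vec_eq_iff)
  then show "a \<in> {s *s ebas p + t *s ebas q |s t. True}" by blast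
qed

lemma mem_ppt: "a \<in> ppt (ebas p) \<longleftrightarrow> a $ p \<noteq> 0 \<and> (\<forall>m. m \<noteq> p \<longrightarrow> a $ m = 0)"
  unfolding ppt_def
proof safe
  fix c assume "c \<noteq> 0" "(c *s ebas p) $ p = 0" then show False by simp
next
  fix c m assume "m \<noteq> p" then show "(c *s ebas p) $ m = 0" by simp
next
  assume "a $ p \<noteq> 0" "\<forall>m. m \<noteq> p \<longrightarrow> a $ m = 0"
  then show "\<exists>c. a = c *s ebas p \<and> c \<noteq> 0"
    by (intro exI[of _ "a$p"]) (auto simp: vec_eq_iff)
qed

context fixes i j k :: 4 assumes G: "good i j k" begin

lemma ne: "i \<noteq> 1" "1 \<noteq> i" "j \<noteq> 1" "1 \<noteq> j" "k \<noteq> 1" "1 \<noteq> k"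
   "i \<noteq> j" "j \<noteq> i" "i \<noteq> k" "k \<noteq> i" "j \<noteq> k" "k \<noteq> j"
  using G unfolding good_def by auto

lemma all4: "(\<forall>m. P m) \<longleftrightarrow> P 1 \<and> P i \<and> P j \<and> P k"
proof safe
  fix m assume "P 1" "P i" "P j" "P k"
  have "m \<in> {1,i,j,k}" using good_univ[OF G] by blast
  then show "P m" using \<open>P 1\<close> \<open>P i\<close> \<open>P j\<close> \<open>P k\<close> by blast
qed auto

lemma sum4: "sum f UNIV = f 1 + f i + f j + f k"
  by (simp add: good_univ[OF G] ne add.assoc)

lemma dot4: "dotc a x = a$1*x$1 + a$i*x$i + a$j*x$j + a$k*x$k"
  by (simp add: dotc_def sum4)

lemma F4: "Fcub x = x$i*x$j*x$k - x$1^3"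
  using good_F[OF G] by (simp add: Fcub_def)

lemma veq: "x = y \<longleftrightarrow> x$1 = y$1 \<and> x$i = y$i \<and> x$j = y$j \<and> x$k = y$k"
  by (simp add: vec_eq_iff all4)

lemma mk_comp [simp]: "mk i j k c1 ci cj ck $ 1 = c1" "mk i j k c1 ci cj ck $ i = ci"
  "mk i j k c1 ci cj ck $ j = cj" "mk i j k c1 ci cj ck $ k = ck"
  by (simp_all add: mk_def ne)

lemma Fderiv: "((\<lambda>t. Fcub (x + t *s w)) has_field_derivative
   (w$i*x$j*x$k + x$i*w$j*x$k + x$i*x$j*w$k - 3*x$1^2*w$1)) (at 0)"
proof -
  have e: "(\<lambda>t. Fcub (x + t *s w)) = (\<lambda>t. (x$i + t*w$i)*(x$j + t*w$j)*(x$k + t*w$k) - (x$1 + t*w$1)^3)"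
    by (simp add: F4)
  show ?thesis unfolding e
    by (rule derivative_eq_intros refl | simp add: algebra_simps)+
qed

lemma sing_iff: "sing_pt a x \<longleftrightarrow> x \<noteq> 0 \<and> dotc a x = 0 \<and> Fcub x = 0 \<and>
   (\<forall>w. dotc a w = 0 \<longrightarrow> w$i*x$j*x$k + x$i*w$j*x$k + x$i*x$j*w$k - 3*x$1^2*w$1 = 0)"
  unfolding sing_pt_def using Fderiv DERIV_unique by metis


lemma nz: "a \<noteq> 0 \<longleftrightarrow> \<not> (a$1 = 0 \<and> a$i = 0 \<and> a$j = 0 \<and> a$k = 0)"
  using veq[of a 0] by simp

lemma triple_iff: "triple_line_sec a (ebas i) (ebas j) \<longleftrightarrow> a \<noteq> 0 \<and> a$i = 0 \<and> a$j = 0 \<and> a$1 = 0"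
proof
  assume T: "triple_line_sec a (ebas i) (ebas j)"
  then obtain b c where a0: "a \<noteq> 0" and ai: "a$i = 0" and aj: "a$j = 0" and
    H: "\<forall>x. dotc a x = 0 \<longrightarrow> Fcub x = c * (dotc b x) ^ 3" and bi: "b$i = 0" and bj: "b$j = 0"
    unfolding triple_line_sec_def by auto
  define x1 where "x1 = mk i j k (-(a$k)) 1 1 (a$1)"
  define x2 where "x2 = mk i j k (-(a$k)) 0 1 (a$1)"
  have d1: "dotc a x1 = 0" "dotc a x2 = 0" unfolding x1_def x2_def by (simp_all add: dot4 ai aj algebra_simps)
  have "dotc b x1 = dotc b x2" unfolding x1_def x2_def by (simp add: dot4 bi bj)
  then have "Fcub x1 = Fcub x2" using H d1 by simp
  then have "a$1 = 0" unfolding x1_def x2_def by (simp add: F4)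
  then show "a \<noteq> 0 \<and> a$i = 0 \<and> a$j = 0 \<and> a$1 = 0" using a0 ai aj by simp
next
  assume A: "a \<noteq> 0 \<and> a$i = 0 \<and> a$j = 0 \<and> a$1 = 0"
  then have ak: "a$k \<noteq> 0" using nz by auto
  show "triple_line_sec a (ebas i) (ebas j)"
    unfolding triple_line_sec_def
    apply (intro conjI exI[of _ "ebas 1"] exI[of _ "-1"])
    using A ak apply (simp_all add: ne)
    apply (clarsimp simp: dot4 F4)
    done
qed


lemma ppt_i: "x \<in> ppt (ebas i) \<longleftrightarrow> x$i \<noteq> 0 \<and> x$1 = 0 \<and> x$j = 0 \<and> x$k = 0"
  by (simp add: mem_ppt all4 ne)
lemma ppt_1: "x \<in> ppt (ebas 1) \<longleftrightarrow> x$1 \<noteq> 0 \<and> x$i = 0 \<and> x$j = 0 \<and> x$k = 0"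
  by (simp add: mem_ppt all4 ne)
lemma ppt_j: "x \<in> ppt (ebas j) \<longleftrightarrow> x$j \<noteq> 0 \<and> x$1 = 0 \<and> x$i = 0 \<and> x$k = 0"
  by (simp add: mem_ppt all4 ne)
lemma ppt_k: "x \<in> ppt (ebas k) \<longleftrightarrow> x$k \<noteq> 0 \<and> x$1 = 0 \<and> x$i = 0 \<and> x$j = 0"
  by (simp add: mem_ppt all4 ne)

lemma sing_ei: assumes "a$i = 0" shows "{x. sing_pt a x} \<supseteq> ppt (ebas i)"
proof
  fix x assume "x \<in> ppt (ebas i)"
  then have x: "x$i \<noteq> 0" "x$1 = 0" "x$j = 0" "x$k = 0" by (simp_all add: ppt_i)
  then have "x \<noteq> 0" using nz by auto
  then show "x \<in> {x. sing_pt a x}" using x assms by (simp add: sing_iff dot4 F4)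
qed

lemma part2:
  assumes a0: "a$i = 0" and a1: "a$1 \<noteq> 0" and aj: "a$j \<noteq> 0" and ak: "a$k \<noteq> 0"
  shows "irreducible_sec a \<and> {x. sing_pt a x} = ppt (ebas i) \<and> node_at a (ebas i)"
proof (intro conjI)
  have anz: "a \<noteq> 0" using a1 nz by auto
  have "\<not> reducible_sec a"
  proof
    assume "reducible_sec a"
    then obtain b M x0 where x0: "dotc a x0 = 0" "dotc b x0 \<noteq> 0" and
      H: "\<forall>x. dotc a x = 0 \<longrightarrow> Fcub x = dotc b x * quadf M x"
      unfolding reducible_sec_def by auto
    have Z: "\<And>x. dotc a x = 0 \<Longrightarrow> dotc b x = 0 \<Longrightarrow> Fcub x = 0" using H by simp
    define B0 where "B0 = b$i"
    define B2 where "B2 = a$1*b$j - a$j*b$1"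
    define B3 where "B3 = a$1*b$k - a$k*b$1"
    have pl: "a$1*x0$1 + a$j*x0$j + a$k*x0$k = 0" using x0(1) a0 by (simp add: dot4)
    have "a$1 * dotc b x0 = a$1*B0*x0$i + B2*x0$j + B3*x0$k + b$1*(a$1*x0$1 + a$j*x0$j + a$k*x0$k)"
      unfolding B0_def B2_def B3_def by (simp add: dot4 algebra_simps)
    then have key: "a$1 * dotc b x0 = a$1*B0*x0$i + B2*x0$j + B3*x0$k" using pl by simp
    have nB: "\<not> (B0 = 0 \<and> B2 = 0 \<and> B3 = 0)"
      using key a1 x0(2) by auto
    show False
    proof (cases "B0 = 0")
      case False
      define x where "x = mk i j k (-(a$j)) (-B2/B0) (a$1) 0"
      have "dotc a x = 0" unfolding x_def using a0 by (simp add: dot4 algebra_simps)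
      moreover have "dotc b x = 0" unfolding x_def using False
        by (simp add: dot4 B0_def B2_def field_simps)
      ultimately have "Fcub x = 0" by (rule Z)
      then show False unfolding x_def using aj by (simp add: F4)
    next
      case True
      define E where "E = -(a$j)*B3 + a$k*B2"
      define x where "x = mk i j k E 0 (a$1*B3) (-(a$1*B2))"
      define y where "y = mk i j k E 1 (a$1*B3) (-(a$1*B2))"
      have "dotc a x = 0" "dotc a y = 0" unfolding x_def y_def E_def using a0
        by (simp_all add: dot4 algebra_simps)
      moreover have "dotc b x = 0" "dotc b y = 0" unfolding x_def y_def E_def using True
        by (simp_all add: dot4 B0_def B2_def B3_def algebra_simps)
      ultimately have "Fcub x = 0" "Fcub y = 0" using Z by auto
      then have e1: "E = 0" and e2: "a$1*B3*(a$1*B2) = 0"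
        unfolding x_def y_def by (simp_all add: F4)
      then have "B2 = 0 \<or> B3 = 0" using a1 by auto
      then show False using e1 nB True aj ak unfolding E_def by auto
    qed
  qed
  then show "irreducible_sec a" using anz by (simp add: irreducible_sec_def)
next
  show "{x. sing_pt a x} = ppt (ebas i)"
  proof
    show "ppt (ebas i) \<subseteq> {x. sing_pt a x}" by (rule sing_ei[OF a0])
    show "{x. sing_pt a x} \<subseteq> ppt (ebas i)"
    proof
      fix x assume "x \<in> {x. sing_pt a x}"
      then have S: "x \<noteq> 0" "dotc a x = 0" "Fcub x = 0" and
        D: "\<And>w. dotc a w = 0 \<Longrightarrow> w$i*x$j*x$k + x$i*w$j*x$k + x$i*x$j*w$k - 3*x$1^2*w$1 = 0"
        by (auto simp: sing_iff)
      have d1: "x$j*x$k = 0" using D[of "ebas i"] a0 by (simp add: ne)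
      have d2: "x$i*(a$1)*x$k + 3*x$1^2*a$j = 0" using D[of "mk i j k (-(a$j)) 0 (a$1) 0"] a0
        by (simp add: dot4 algebra_simps)
      have d3: "x$i*x$j*(a$1) + 3*x$1^2*a$k = 0" using D[of "mk i j k (-(a$k)) 0 0 (a$1)"] a0
        by (simp add: dot4 algebra_simps)
      have pl: "a$1*x$1 + a$j*x$j + a$k*x$k = 0" using S(2) a0 by (simp add: dot4)
      have f: "x$i*x$j*x$k = x$1^3" using S(3) by (simp add: F4)
      have x1: "x$1 = 0" using f d1 by (simp add: mult.assoc)
      have "x$j = 0 \<and> x$k = 0" using d1 pl x1 aj ak by auto
      then show "x \<in> ppt (ebas i)" using x1 S(1) nz by (auto simp: ppt_i)
    qed
  qed
next
  define u where "u = mk i j k (-(a$j)) 0 (a$1) 0"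
  define v where "v = mk i j k (-(a$k)) 0 0 (a$1)"
  have J: "dotc a u = 0 \<and> dotc a v = 0 \<and> indep3 (ebas i) u v \<and> (\<forall>s t. Fcub (ebas i + s *s u + t *s v) = 0 * s^2 + (a$1)^2 * s * t + 0 * t^2 +
            (a$j)^3 * s^3 + (3*(a$j)^2*a$k) * s^2 * t + (3*a$j*(a$k)^2) * s * t^2 + (a$k)^3 * t^3)"
  proof (intro conjI allI)
    show "dotc a u = 0" unfolding u_def using a0 by (simp add: dot4 algebra_simps)
    show "dotc a v = 0" unfolding v_def using a0 by (simp add: dot4 algebra_simps)
    show "indep3 (ebas i) u v" unfolding indep3_def u_def v_def
    proof (intro allI impI)
      fix r s t :: complex assume "r *s ebas i + s *s mk i j k (-(a$j)) 0 (a$1) 0 + t *s mk i j k (-(a$k)) 0 0 (a$1) = 0"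
      then have "r = 0" "s * a$1 = 0" "t * a$1 = 0" unfolding veq[of _ 0] by (simp_all add: ne)
      then show "r = 0 \<and> s = 0 \<and> t = 0" using a1 by simp
    qed
    fix s t
    show "Fcub (ebas i + s *s u + t *s v) = 0 * s^2 + (a$1)^2 * s * t + 0 * t^2 +
            (a$j)^3 * s^3 + (3*(a$j)^2*a$k) * s^2 * t + (3*a$j*(a$k)^2) * s * t^2 + (a$k)^3 * t^3"
      unfolding u_def v_def by (simp add: F4 ne) (simp add: algebra_simps power2_eq_square power3_eq_cube)
  qed
  have "local_jet a (ebas i) 0 ((a$1)^2) 0 ((a$j)^3) (3*(a$j)^2*a$k) (3*a$j*(a$k)^2) ((a$k)^3)"
    unfolding local_jet_def
    apply (intro conjI)
    using a1 nz apply auto[1]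
    using a0 apply simp
    apply (rule exI[of _ u], rule exI[of _ v])
    by (fact J)
  then show "node_at a (ebas i)" unfolding node_at_def using a1 by fastforce
qed


lemma qM: "quadf (\<chi> p q. if p = i \<and> q = j then 1 else if p = k \<and> q = k then C else 0) x = x$i*x$j + C*(x$k)^2"
  unfolding quadf_def by (simp add: sum4 ne power2_eq_square)

lemma part4:
  assumes a0: "a$i = 0" and aj: "a$j = 0" and a1: "a$1 \<noteq> 0" and ak: "a$k \<noteq> 0"
  shows "line_plus_conic_sec a (ebas i) (ebas j)"
proof -
  define C where "C = (a$k)^3 / (a$1)^3"
  define M :: "complex^4^4" where "M = (\<chi> p q. if p = i \<and> q = j then 1 else if p = k \<and> q = k then C else 0)"
  have q: "\<And>x. quadf M x = x$i*x$j + C*(x$k)^2" unfolding M_def by (rule qM)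
  have C0: "C \<noteq> 0" using a1 ak by (simp add: C_def)
  have fac: "\<forall>x. dotc a x = 0 \<longrightarrow> Fcub x = dotc (ebas k) x * quadf M x"
  proof (intro allI impI)
    fix x assume "dotc a x = 0"
    then have "a$1*x$1 + a$k*x$k = 0" using a0 aj by (simp add: dot4)
    then have "a$1*x$1 = -(a$k*x$k)" by (simp add: eq_neg_iff_add_eq_0)
    then have x1: "x$1 = -(a$k*x$k)/a$1" using a1 by (simp add: field_simps)
    show "Fcub x = dotc (ebas k) x * quadf M x"
      unfolding q F4 x1 C_def using a1 by (simp add: field_simps power3_eq_cube power2_eq_square)
  qed
  have nf: "\<not> (\<exists>b1 b2. \<forall>x. dotc a x = 0 \<longrightarrow> quadf M x = dotc b1 x * dotc b2 x)"
  proof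
    assume "\<exists>b1 b2. \<forall>x. dotc a x = 0 \<longrightarrow> quadf M x = dotc b1 x * dotc b2 x"
    then obtain b1 b2 where H: "\<And>x. dotc a x = 0 \<Longrightarrow> quadf M x = dotc b1 x * dotc b2 x" by blast
    define w where "w = mk i j k (-(a$k)) 0 0 (a$1)"
    have pl: "dotc a (mk i j k (-(a$k)) s t (a$1)) = 0" "dotc a (mk i j k 0 s t 0) = 0" for s t
      using a0 aj by (simp_all add: dot4 algebra_simps)
    have E1: "b1$i * b2$i = 0" using H[OF pl(2)[of 1 0]] by (simp add: q dot4)
    have E3: "dotc b1 w * dotc b2 w = C*(a$1)^2" using H[OF pl(1)[of 0 0]] by (simp add: q w_def)
    have E4: "(b1$i + b1$j) * (b2$i + b2$j) = 1" using H[OF pl(2)[of 1 1]] by (simp add: q dot4)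
    have E2: "b1$j * b2$j = 0" using H[OF pl(2)[of 0 1]] by (simp add: q dot4)
    have E5: "(b1$i + dotc b1 w) * (b2$i + dotc b2 w) = C*(a$1)^2"
      using H[OF pl(1)[of 1 0]] by (simp add: q dot4 w_def algebra_simps)
    have r0: "dotc b1 w \<noteq> 0" "dotc b2 w \<noteq> 0" using E3 C0 a1 by auto
    have "b1$i = 0 \<and> b2$i = 0"
    proof (cases "b1$i = 0")
      case True
      then have "dotc b1 w * b2$i = 0" using E5 E3 by (simp add: algebra_simps)
      then show ?thesis using True r0 by simp
    next
      case False
      then have b2: "b2$i = 0" using E1 by simp
      then have "b1$i * dotc b2 w = 0" using E5 E3 by (simp add: algebra_simps)
      then show ?thesis using r0 b2 by simp
    qed
    then show False using E4 E2 by simp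
  qed
  have ex: "\<exists>x. dotc a x = 0 \<and> dotc (ebas k) x \<noteq> 0"
    apply (rule exI[of _ "mk i j k (-(a$k)) 0 0 (a$1)"]) using a0 aj a1 by (simp add: dot4 algebra_simps ne)
  show ?thesis unfolding line_plus_conic_sec_def
    apply (intro conjI)
    using a1 nz apply auto[1]
    using a0 apply simp
    using aj apply simp
    apply (rule exI[of _ "ebas k"], rule exI[of _ M])
    apply (intro conjI fac nf ex)
    by (simp_all add: ne q)
qed

lemma mem_lineP: "p \<noteq> q \<Longrightarrow> x \<in> lineP (ebas p) (ebas q) \<longleftrightarrow> (\<forall>m. m \<noteq> p \<and> m \<noteq> q \<longrightarrow> x $ m = 0)"
  using mem_pencil[of p q x] by (simp add: lineP_def pencil_def)

lemma part5:
  assumes a1: "a$1 = 0" and a0: "a$i = 0" and aj: "a$j \<noteq> 0" and ak: "a$k \<noteq> 0"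
  shows "irreducible_sec a \<and>
              sec_pts a \<inter> lineP (ebas i) (ebas j) = ppt (ebas i) \<and>
              sec_pts a \<inter> lineP (ebas i) (ebas k) = ppt (ebas i) \<and>
              sec_pts a \<inter> lineP (ebas j) (ebas k) \<noteq> {} \<and>
              sec_pts a \<inter> lineP (ebas j) (ebas k) \<inter> (ppt (ebas j) \<union> ppt (ebas k)) = {} \<and>
              {x. sing_pt a x} = ppt (ebas i) \<and> cusp_at a (ebas i)"
proof (intro conjI)
  have anz: "a \<noteq> 0" using aj nz by auto
  have "\<not> reducible_sec a"
  proof
    assume "reducible_sec a"
    then obtain b M where H: "\<forall>x. dotc a x = 0 \<longrightarrow> Fcub x = dotc b x * quadf M x"
      unfolding reducible_sec_def by auto
    have Z: "\<And>x. dotc a x = 0 \<Longrightarrow> dotc b x = 0 \<Longrightarrow> Fcub x = 0" using H by simp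
    show False
    proof (cases "b$i = 0")
      case False
      define x where "x = mk i j k 1 (-(b$1)/(b$i)) 0 0"
      have "dotc a x = 0" "dotc b x = 0" unfolding x_def using a0 a1 False by (simp_all add: dot4)
      then have "Fcub x = 0" by (rule Z)
      then show False unfolding x_def by (simp add: F4)
    next
      case bi: True
      show False
      proof (cases "b$1 = 0")
        case True
        have "dotc a (ebas 1) = 0" "dotc b (ebas 1) = 0" using a1 True by simp_all
        then have "Fcub (ebas 1) = 0" by (rule Z)
        then show False by (simp add: F4 ne)
      next
        case False
        define Br where "Br = a$k*b$j - a$j*b$k"
        define x where "x = mk i j k (-Br) 0 (b$1*a$k) (-(b$1*a$j))"
        define y where "y = mk i j k (-Br) 1 (b$1*a$k) (-(b$1*a$j))"
        have "dotc a x = 0" "dotc a y = 0" unfolding x_def y_def using a0 a1 by (simp_all add: dot4 algebra_simps)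
        moreover have "dotc b x = 0" "dotc b y = 0" unfolding x_def y_def Br_def using bi
          by (simp_all add: dot4 algebra_simps)
        ultimately have "Fcub x = 0" "Fcub y = 0" using Z by auto
        then have "b$1*a$k*(b$1*a$j) = 0" unfolding x_def y_def by (simp add: F4)
        then show False using False aj ak by simp
      qed
    qed
  qed
  then show "irreducible_sec a" using anz by (simp add: irreducible_sec_def)
next
  show "sec_pts a \<inter> lineP (ebas i) (ebas j) = ppt (ebas i)"
    using a0 a1 aj by (auto simp: sec_pts_def mem_lineP all4 ne ppt_i dot4 F4 nz)
  show "sec_pts a \<inter> lineP (ebas i) (ebas k) = ppt (ebas i)"
    using a0 a1 ak by (auto simp: sec_pts_def mem_lineP all4 ne ppt_i dot4 F4 nz)
  have "mk i j k 0 0 (a$k) (-(a$j)) \<in> sec_pts a \<inter> lineP (ebas j) (ebas k)"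
    using a0 a1 ak by (auto simp: sec_pts_def mem_lineP all4 ne dot4 F4 nz algebra_simps)
  then show "sec_pts a \<inter> lineP (ebas j) (ebas k) \<noteq> {}" by blast
  show "sec_pts a \<inter> lineP (ebas j) (ebas k) \<inter> (ppt (ebas j) \<union> ppt (ebas k)) = {}"
    using a0 a1 aj ak by (auto simp: sec_pts_def ppt_j ppt_k dot4)
next
  show "{x. sing_pt a x} = ppt (ebas i)"
  proof
    show "ppt (ebas i) \<subseteq> {x. sing_pt a x}" by (rule sing_ei[OF a0])
    show "{x. sing_pt a x} \<subseteq> ppt (ebas i)"
    proof
      fix x assume "x \<in> {x. sing_pt a x}"
      then have S: "x \<noteq> 0" "dotc a x = 0" "Fcub x = 0" and
        D: "\<And>w. dotc a w = 0 \<Longrightarrow> w$i*x$j*x$k + x$i*w$j*x$k + x$i*x$j*w$k - 3*x$1^2*w$1 = 0"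
        by (auto simp: sing_iff)
      have d1: "x$j*x$k = 0" using D[of "ebas i"] a0 by (simp add: ne)
      have d2: "x$1 = 0" using D[of "ebas 1"] a1 by (simp add: ne)
      have pl: "a$j*x$j + a$k*x$k = 0" using S(2) a0 a1 by (simp add: dot4)
      have "x$j = 0 \<and> x$k = 0" using d1 pl aj ak by auto
      then show "x \<in> ppt (ebas i)" using d2 S(1) nz by (auto simp: ppt_i)
    qed
  qed
next
  define v where "v = mk i j k 0 0 (a$k) (-(a$j))"
  have J: "dotc a (ebas 1) = 0 \<and> dotc a v = 0 \<and> indep3 (ebas i) (ebas 1) v \<and> (\<forall>s t. Fcub (ebas i + s *s ebas 1 + t *s v) = 0 * s^2 + 0 * s * t + (-(a$j*a$k)) * t^2 +
            (-1) * s^3 + 0 * s^2 * t + 0 * s * t^2 + 0 * t^3)"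
  proof (intro conjI allI)
    show "dotc a (ebas 1) = 0" using a1 by simp
    show "dotc a v = 0" unfolding v_def using a0 a1 by (simp add: dot4 algebra_simps)
    show "indep3 (ebas i) (ebas 1) v" unfolding indep3_def v_def
    proof (intro allI impI)
      fix r s t :: complex assume "r *s ebas i + s *s ebas 1 + t *s mk i j k 0 0 (a$k) (-(a$j)) = 0"
      then have "r = 0" "s = 0" "t * a$k = 0" unfolding veq[of _ 0] by (simp_all add: ne)
      then show "r = 0 \<and> s = 0 \<and> t = 0" using ak by simp
    qed
    fix s t
    show "Fcub (ebas i + s *s ebas 1 + t *s v) = 0 * s^2 + 0 * s * t + (-(a$j*a$k)) * t^2 +
            (-1) * s^3 + 0 * s^2 * t + 0 * s * t^2 + 0 * t^3"
      unfolding v_def by (simp add: F4 ne) (simp add: algebra_simps power2_eq_square power3_eq_cube)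
  qed
  have LJ: "local_jet a (ebas i) 0 0 (-(a$j*a$k)) (-1) 0 0 0"
    unfolding local_jet_def
    apply (intro conjI)
    using aj nz apply auto[1]
    using a0 apply simp
    apply (rule exI[of _ "ebas 1"], rule exI[of _ v])
    by (fact J)
  have K: "\<forall>s0 t0. (s0, t0) \<noteq> (0, 0) \<and> 0 * s0^2 + 0 * s0 * t0 + (-(a$j*a$k)) * t0^2 = 0 \<longrightarrow>
         (-1) * s0^3 + 0 * s0^2 * t0 + 0 * s0 * t0^2 + 0 * t0^3 \<noteq> (0::complex)"
    using aj ak by auto
  show "cusp_at a (ebas i)" unfolding cusp_at_def
    apply (rule exI[of _ 0], rule exI[of _ 0], rule exI[of _ "-(a$j*a$k)"], rule exI[of _ "-1"],
           rule exI[of _ 0], rule exI[of _ 0], rule exI[of _ 0])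
    using LJ K aj ak by simp
qed


lemma zero_iff: "a = 0 \<longleftrightarrow> a$1 = 0 \<and> a$i = 0 \<and> a$j = 0 \<and> a$k = 0"
  using veq[of a 0] by simp

lemma p1: "a \<in> pencil (ebas j) (ebas k) \<longleftrightarrow> a$1 = 0 \<and> a$i = 0"
  by (simp add: mem_pencil all4 ne)
lemma p2: "a \<in> pencil (ebas 1) (ebas k) \<longleftrightarrow> a$i = 0 \<and> a$j = 0"
  by (simp add: mem_pencil all4 ne)
lemma p3: "a \<in> pencil (ebas 1) (ebas j) \<longleftrightarrow> a$i = 0 \<and> a$k = 0"
  by (simp add: mem_pencil all4 ne)
lemma netm: "a \<in> net i \<longleftrightarrow> a \<noteq> 0 \<and> a$i = 0"
  by (simp add: net_def)

end

lemma indep2_ebas: "p \<noteq> q \<Longrightarrow> indep2 (ebas p) (ebas q)"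
  unfolding indep2_def
proof (intro allI impI)
  fix s t assume "p \<noteq> q" "s *s ebas p + t *s ebas q = 0"
  then have "(s *s ebas p + t *s ebas q) $ p = 0" "(s *s ebas p + t *s ebas q) $ q = 0" by simp_all
  then show "s = 0 \<and> t = 0" using \<open>p \<noteq> q\<close> by simp
qed

lemma main_ijk:
  assumes G: "good i j k"
  shows "\<exists>u1 v1 u2 v2 u3 v3.
          indep2 u1 v1 \<and> indep2 u2 v2 \<and> indep2 u3 v3 \<and>
          pencil u1 v1 \<subseteq> insert 0 (net i) \<and> pencil u2 v2 \<subseteq> insert 0 (net i) \<and>
          pencil u3 v3 \<subseteq> insert 0 (net i) \<and>
          pencil u1 v1 \<inter> pencil u2 v2 \<inter> pencil u3 v3 \<subseteq> {0} \<and>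
          (\<forall>a \<in> net i - (pencil u1 v1 \<union> pencil u2 v2 \<union> pencil u3 v3).
              irreducible_sec a \<and> {x. sing_pt a x} = ppt (ebas i) \<and> node_at a (ebas i)) \<and>
          (pencil u2 v2 \<inter> pencil u3 v3) - {0} = ppt (ebas 1) \<and>
          (pencil u1 v1 \<inter> pencil u2 v2) - {0} = {a. triple_line_sec a (ebas i) (ebas j)} \<and>
          (pencil u1 v1 \<inter> pencil u3 v3) - {0} = {a. triple_line_sec a (ebas i) (ebas k)} \<and>
          pencil u2 v2 - (pencil u1 v1 \<union> pencil u3 v3) =
             pencil u2 v2 - ({0} \<union> ppt (ebas 1) \<union> {a. triple_line_sec a (ebas i) (ebas j)}) \<and>
          (\<forall>a \<in> pencil u2 v2 - (pencil u1 v1 \<union> pencil u3 v3).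
              line_plus_conic_sec a (ebas i) (ebas j)) \<and>
          pencil u3 v3 - (pencil u1 v1 \<union> pencil u2 v2) =
             pencil u3 v3 - ({0} \<union> ppt (ebas 1) \<union> {a. triple_line_sec a (ebas i) (ebas k)}) \<and>
          (\<forall>a \<in> pencil u3 v3 - (pencil u1 v1 \<union> pencil u2 v2).
              line_plus_conic_sec a (ebas i) (ebas k)) \<and>
          (\<forall>a \<in> pencil u1 v1 - {0}. \<not> triple_line_sec a (ebas i) (ebas j) \<and>
                \<not> triple_line_sec a (ebas i) (ebas k) \<longrightarrow>
              irreducible_sec a \<and>
              sec_pts a \<inter> lineP (ebas i) (ebas j) = ppt (ebas i) \<and>
              sec_pts a \<inter> lineP (ebas i) (ebas k) = ppt (ebas i) \<and>
              sec_pts a \<inter> lineP (ebas j) (ebas k) \<noteq> {} \<and>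
              sec_pts a \<inter> lineP (ebas j) (ebas k) \<inter> (ppt (ebas j) \<union> ppt (ebas k)) = {} \<and>
              {x. sing_pt a x} = ppt (ebas i) \<and> cusp_at a (ebas i))"
proof -
  note G' = good_swap[OF G]
  note ne = ne[OF G]
  note S = p1[OF G] p2[OF G] p3[OF G] netm[OF G] zero_iff[OF G] ppt_1[OF G] triple_iff[OF G] triple_iff[OF G']
  show ?thesis
  proof (rule exI[of _ "ebas j"], rule exI[of _ "ebas k"], rule exI[of _ "ebas 1"], rule exI[of _ "ebas k"],
      rule exI[of _ "ebas 1"], rule exI[of _ "ebas j"], intro conjI)
    show "indep2 (ebas j) (ebas k)" "indep2 (ebas 1) (ebas k)" "indep2 (ebas 1) (ebas j)"
      using ne by (simp_all add: indep2_ebas)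
    show "pencil (ebas j) (ebas k) \<subseteq> insert 0 (net i)" "pencil (ebas 1) (ebas k) \<subseteq> insert 0 (net i)"
      "pencil (ebas 1) (ebas j) \<subseteq> insert 0 (net i)" by (auto simp: S)
    show "pencil (ebas j) (ebas k) \<inter> pencil (ebas 1) (ebas k) \<inter> pencil (ebas 1) (ebas j) \<subseteq> {0}"
      by (auto simp: S)
    show "pencil (ebas 1) (ebas k) \<inter> pencil (ebas 1) (ebas j) - {0} = ppt (ebas 1)" by (auto simp: S)
    show "pencil (ebas j) (ebas k) \<inter> pencil (ebas 1) (ebas k) - {0} = {a. triple_line_sec a (ebas i) (ebas j)}"
      by (auto simp: S)
    show "pencil (ebas j) (ebas k) \<inter> pencil (ebas 1) (ebas j) - {0} = {a. triple_line_sec a (ebas i) (ebas k)}"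
      by (auto simp: S)
    show "pencil (ebas 1) (ebas k) - (pencil (ebas j) (ebas k) \<union> pencil (ebas 1) (ebas j)) =
          pencil (ebas 1) (ebas k) - ({0} \<union> ppt (ebas 1) \<union> {a. triple_line_sec a (ebas i) (ebas j)})"
      by (auto simp: S)
    show "pencil (ebas 1) (ebas j) - (pencil (ebas j) (ebas k) \<union> pencil (ebas 1) (ebas k)) =
          pencil (ebas 1) (ebas j) - ({0} \<union> ppt (ebas 1) \<union> {a. triple_line_sec a (ebas i) (ebas k)})"
      by (auto simp: S)
    show "\<forall>a \<in> net i - (pencil (ebas j) (ebas k) \<union> pencil (ebas 1) (ebas k) \<union> pencil (ebas 1) (ebas j)).
       irreducible_sec a \<and> {x. sing_pt a x} = ppt (ebas i) \<and> node_at a (ebas i)"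
    proof
      fix a assume "a \<in> net i - (pencil (ebas j) (ebas k) \<union> pencil (ebas 1) (ebas k) \<union> pencil (ebas 1) (ebas j))"
      then have "a$i = 0" "a$1 \<noteq> 0" "a$j \<noteq> 0" "a$k \<noteq> 0" by (auto simp: S)
      then show "irreducible_sec a \<and> {x. sing_pt a x} = ppt (ebas i) \<and> node_at a (ebas i)"
        by (rule part2[OF G])
    qed
    show "\<forall>a \<in> pencil (ebas 1) (ebas k) - (pencil (ebas j) (ebas k) \<union> pencil (ebas 1) (ebas j)).
       line_plus_conic_sec a (ebas i) (ebas j)"
    proof
      fix a assume "a \<in> pencil (ebas 1) (ebas k) - (pencil (ebas j) (ebas k) \<union> pencil (ebas 1) (ebas j))"
      then have "a$i = 0" "a$j = 0" "a$1 \<noteq> 0" "a$k \<noteq> 0" by (auto simp: S)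
      then show "line_plus_conic_sec a (ebas i) (ebas j)" by (rule part4[OF G])
    qed
    show "\<forall>a \<in> pencil (ebas 1) (ebas j) - (pencil (ebas j) (ebas k) \<union> pencil (ebas 1) (ebas k)).
       line_plus_conic_sec a (ebas i) (ebas k)"
    proof
      fix a assume "a \<in> pencil (ebas 1) (ebas j) - (pencil (ebas j) (ebas k) \<union> pencil (ebas 1) (ebas k))"
      then have "a$i = 0" "a$k = 0" "a$1 \<noteq> 0" "a$j \<noteq> 0" by (auto simp: S)
      then show "line_plus_conic_sec a (ebas i) (ebas k)" by (rule part4[OF G'])
    qed
    show "\<forall>a \<in> pencil (ebas j) (ebas k) - {0}. \<not> triple_line_sec a (ebas i) (ebas j) \<and>
                \<not> triple_line_sec a (ebas i) (ebas k) \<longrightarrow>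
              irreducible_sec a \<and>
              sec_pts a \<inter> lineP (ebas i) (ebas j) = ppt (ebas i) \<and>
              sec_pts a \<inter> lineP (ebas i) (ebas k) = ppt (ebas i) \<and>
              sec_pts a \<inter> lineP (ebas j) (ebas k) \<noteq> {} \<and>
              sec_pts a \<inter> lineP (ebas j) (ebas k) \<inter> (ppt (ebas j) \<union> ppt (ebas k)) = {} \<and>
              {x. sing_pt a x} = ppt (ebas i) \<and> cusp_at a (ebas i)"
    proof (intro ballI impI)
      fix a assume "a \<in> pencil (ebas j) (ebas k) - {0}"
        "\<not> triple_line_sec a (ebas i) (ebas j) \<and> \<not> triple_line_sec a (ebas i) (ebas k)"
      then have "a$1 = 0" "a$i = 0" "a$j \<noteq> 0" "a$k \<noteq> 0" by (auto simp: S)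
      then show "irreducible_sec a \<and>
              sec_pts a \<inter> lineP (ebas i) (ebas j) = ppt (ebas i) \<and>
              sec_pts a \<inter> lineP (ebas i) (ebas k) = ppt (ebas i) \<and>
              sec_pts a \<inter> lineP (ebas j) (ebas k) \<noteq> {} \<and>
              sec_pts a \<inter> lineP (ebas j) (ebas k) \<inter> (ppt (ebas j) \<union> ppt (ebas k)) = {} \<and>
              {x. sing_pt a x} = ppt (ebas i) \<and> cusp_at a (ebas i)"
        by (rule part5[OF G])
    qed
  qed
qed

lemma good_of: assumes A: "{i, j, k} = {0, 2, 3::4}" shows "good i j k"
proof -
  have "(1::4) \<notin> {0,2,3}" by simp
  moreover have "i \<in> {0,2,3}" "j \<in> {0,2,3}" "k \<in> {0,2,3}" using A by blast+
  ultimately have n1: "i \<noteq> 1" "j \<noteq> 1" "k \<noteq> 1" by metis+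
  have c: "card {i,j,k} = 3" using A by simp
  have "i \<noteq> j \<and> i \<noteq> k \<and> j \<noteq> k"
  proof (rule ccontr)
    assume "\<not> (i \<noteq> j \<and> i \<noteq> k \<and> j \<noteq> k)"
    then have "card {i,j,k} \<le> 2" by (auto simp: card_insert_if)
    then show False using c by simp
  qed
  then show ?thesis using n1 unfolding good_def by simp
qed

lemma Fe: "Fcub (ebas 0) = 0" "Fcub (ebas 2) = 0" "Fcub (ebas 3) = 0"
  by (simp_all add: Fcub_def)

lemma ebas_nz: "ebas m \<noteq> 0"
proof
  assume "ebas m = 0" then have "ebas m $ m = 0" by simp
  then show False by simp
qed

lemma part1: "{a. a \<noteq> 0 \<and> a \<notin> net 0 \<union> net 2 \<union> net 3} =
           {a. a \<noteq> 0 \<and> ebas 0 \<notin> sec_pts a \<and> ebas 2 \<notin> sec_pts a \<and> ebas 3 \<notin> sec_pts a}"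
  by (auto simp: net_def sec_pts_def Fe ebas_nz)

theorem lemma4p10:
  shows "{a. a \<noteq> 0 \<and> a \<notin> net 0 \<union> net 2 \<union> net 3} =
           {a. a \<noteq> 0 \<and> ebas 0 \<notin> sec_pts a \<and> ebas 2 \<notin> sec_pts a \<and> ebas 3 \<notin> sec_pts a}
    \<and> (\<forall>i j k :: 4. {i, j, k} = {0, 2, 3} \<longrightarrow>
        (\<exists>u1 v1 u2 v2 u3 v3.
          indep2 u1 v1 \<and> indep2 u2 v2 \<and> indep2 u3 v3 \<and>
          pencil u1 v1 \<subseteq> insert 0 (net i) \<and> pencil u2 v2 \<subseteq> insert 0 (net i) \<and>
          pencil u3 v3 \<subseteq> insert 0 (net i) \<and>
          pencil u1 v1 \<inter> pencil u2 v2 \<inter> pencil u3 v3 \<subseteq> {0} \<and>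
          \<comment> \<open>(ii)\<close>
          (\<forall>a \<in> net i - (pencil u1 v1 \<union> pencil u2 v2 \<union> pencil u3 v3).
              irreducible_sec a \<and> {x. sing_pt a x} = ppt (ebas i) \<and> node_at a (ebas i)) \<and>
          \<comment> \<open>(iii)\<close>
          (pencil u2 v2 \<inter> pencil u3 v3) - {0} = ppt (ebas 1) \<and>
          (pencil u1 v1 \<inter> pencil u2 v2) - {0} = {a. triple_line_sec a (ebas i) (ebas j)} \<and>
          (pencil u1 v1 \<inter> pencil u3 v3) - {0} = {a. triple_line_sec a (ebas i) (ebas k)} \<and>
          \<comment> \<open>(iv)\<close>
          pencil u2 v2 - (pencil u1 v1 \<union> pencil u3 v3) =
             pencil u2 v2 - ({0} \<union> ppt (ebas 1) \<union> {a. triple_line_sec a (ebas i) (ebas j)}) \<and>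
          (\<forall>a \<in> pencil u2 v2 - (pencil u1 v1 \<union> pencil u3 v3).
              line_plus_conic_sec a (ebas i) (ebas j)) \<and>
          pencil u3 v3 - (pencil u1 v1 \<union> pencil u2 v2) =
             pencil u3 v3 - ({0} \<union> ppt (ebas 1) \<union> {a. triple_line_sec a (ebas i) (ebas k)}) \<and>
          (\<forall>a \<in> pencil u3 v3 - (pencil u1 v1 \<union> pencil u2 v2).
              line_plus_conic_sec a (ebas i) (ebas k)) \<and>
          \<comment> \<open>(v)\<close>
          (\<forall>a \<in> pencil u1 v1 - {0}. \<not> triple_line_sec a (ebas i) (ebas j) \<and>
                \<not> triple_line_sec a (ebas i) (ebas k) \<longrightarrow>
              irreducible_sec a \<and>
              sec_pts a \<inter> lineP (ebas i) (ebas j) = ppt (ebas i) \<and>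
              sec_pts a \<inter> lineP (ebas i) (ebas k) = ppt (ebas i) \<and>
              sec_pts a \<inter> lineP (ebas j) (ebas k) \<noteq> {} \<and>
              sec_pts a \<inter> lineP (ebas j) (ebas k) \<inter> (ppt (ebas j) \<union> ppt (ebas k)) = {} \<and>
              {x. sing_pt a x} = ppt (ebas i) \<and> cusp_at a (ebas i))))"
  apply (rule conjI)
   apply (rule part1)
  apply (intro allI impI)
  apply (rule main_ijk)
  apply (erule good_of)
  done

end
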